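(* Let $A\in\mathcal U=\mathbb Q\langle\mathcal X\rangle$ and let $w=x_0^{k_1}x_1x_0^{k_2}x_1\cdots x_0^{k_d}x_1x_0^{k_{d+1}}$ be a word ($d\ge0$, $k_i\ge0$). Then, in iterated Sweedler notation $\Delta_ш^{(n)}(A)=A_{(1)}\otimes\cdots\otimes A_{(n+1)}$, $A\circledast w=A_{(1)}\,x_0^{k_1}\,S(A_{(2)})\,x_1\,A_{(3)}\,x_0^{k_2}\,S(A_{(4)})\,x_1\,A_{(5)}\cdots x_0^{k_d}\,S(A_{(2d)})\,x_1\,A_{(2d+1)}\,x_0^{k_{d+1}}$.
   Context: $\mathcal X=\{x_0,x_1\}$; $\mathfrak f_{\mathcal X}$ is the free Lie algebra over $\mathbb Q$ on $\mathcal X$ with bracket $[-,-]$, and its universal enveloping algebra is $\mathcal U=\mathbb Q\langle\mathcal X\rangle$ with concatenation and the coproduct $\Delta_ш$ (concatenation-multiplicative, $x_i$ primitive); Sweedler notation $\Delta_ш(A)=A_{(1)}\otimes A_{(2)}$. $S$ is the antipode $S(\varepsilon_1\cdots\varepsilon_n)=(-1)^n\varepsilon_n\cdots\varepsilon_1$. For $f\in\mathfrak f_{\mathcal X}$ let $d_f$ be the Lie derivation with $d_f(x_0)=0$, $d_f(x_1)=[x_1,f]$, and $f\triangleright g=d_f(g)$ for $f,g\in\mathfrak f_{\mathcal X}$; this makes $(\mathfrak f_{\mathcal X},[-,-],\triangleright)$ a post-Lie algebra. Extend $\triangleright$ to $\mathcal U\times\mathcal U\to\mathcal U$ (uniquely)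 by the rules $x\triangleright\mathbf1=0$, $\mathbf1\triangleright A=A$, $xA\triangleright y=x\triangleright(A\triangleright y)-(x\triangleright A)\triangleright y$, $A\triangleright BC=(A_{(1)}\triangleright B)(A_{(2)}\triangleright C)$ for $x,y\in\mathfrak f_{\mathcal X}$, $A,B,C\in\mathcal U$. The Grossman–Larson product is $A\circledast B=A_{(1)}(A_{(2)}\triangleright B)$. *)

theory Defs
  imports Complex_Main
begin

datatype letter = X0 | X1

type_synonym word = "letter list"

text \<open>Elements of U: rational-valued functions on words with finite support
  (noncommutative polynomials); the basis element for a word w is basis w.\<close>
type_synonym ncpoly = "word \<Rightarrow> rat"

definition U :: "ncpoly set" where
  "U = {a. finite {w. a w \<noteq> 0}}"

definition supp :: "ncpoly \<Rightarrow> word set" where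
  "supp a = {w. a w \<noteq> 0}"

definition basis :: "word \<Rightarrow> ncpoly" where
  "basis w = (\<lambda>v. if v = w then 1 else 0)"

definition nc_one :: ncpoly where "nc_one = basis []"
definition nc_zero :: ncpoly where "nc_zero = (\<lambda>_. 0)"
definition nc_add :: "ncpoly \<Rightarrow> ncpoly \<Rightarrow> ncpoly" where
  "nc_add a b = (\<lambda>w. a w + b w)"
definition nc_diff :: "ncpoly \<Rightarrow> ncpoly \<Rightarrow> ncpoly" where
  "nc_diff a b = (\<lambda>w. a w - b w)"
definition nc_smult :: "rat \<Rightarrow> ncpoly \<Rightarrow> ncpoly" where
  "nc_smult c a = (\<lambda>w. c * a w)"

definition nc_mult :: "ncpoly \<Rightarrow> ncpoly \<Rightarrow> ncpoly" where
  "nc_mult a b = (\<lambda>w. \<Sum>i\<le>length w. a (take i w) * b (drop i w))"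

definition nc_sum :: "('i \<Rightarrow> ncpoly) \<Rightarrow> 'i set \<Rightarrow> ncpoly" where
  "nc_sum F I = (\<lambda>w. \<Sum>i\<in>I. F i w)"

definition nc_sum_list :: "ncpoly list \<Rightarrow> ncpoly" where
  "nc_sum_list xs = (\<lambda>w. sum_list (map (\<lambda>a. a w) xs))"

definition bracket :: "ncpoly \<Rightarrow> ncpoly \<Rightarrow> ncpoly" where
  "bracket a b = nc_diff (nc_mult a b) (nc_mult b a)"

inductive_set lieX :: "ncpoly set" where
  gen0: "basis [X0] \<in> lieX"
| gen1: "basis [X1] \<in> lieX"
| add: "a \<in> lieX \<Longrightarrow> b \<in> lieX \<Longrightarrow> nc_add a b \<in> lieX"
| smult: "a \<in> lieX \<Longrightarrow> nc_smult c a \<in> lieX"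
| brk: "a \<in> lieX \<Longrightarrow> b \<in> lieX \<Longrightarrow> bracket a b \<in> lieX"

text \<open>cop w lists the terms u \<otimes> v of the shuffle coproduct of the word w
  (with multiplicity): letters are primitive and the coproduct is multiplicative.\<close>
fun cop :: "word \<Rightarrow> (word \<times> word) list" where
  "cop [] = [([], [])]"
| "cop (x # w) = map (\<lambda>(u, v). (x # u, v)) (cop w) @ map (\<lambda>(u, v). (u, x # v)) (cop w)"

text \<open>deco n w lists the terms w_(1) \<otimes> ... \<otimes> w_(n+1) of the iterated coproduct.\<close>
fun deco :: "nat \<Rightarrow> word \<Rightarrow> word list list" where
  "deco 0 w = [[w]]"
| "deco (Suc n) w = concat (map (\<lambda>(u, v). map (\<lambda>r. u # r) (deco n v)) (cop w))"

text \<open>Sweedler sum  A_(1) \<otimes> A_(2) \<mapsto> F A_(1) A_(2), extended linearly in A.\<close>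
definition sweedler2 :: "ncpoly \<Rightarrow> (word \<Rightarrow> word \<Rightarrow> ncpoly) \<Rightarrow> ncpoly" where
  "sweedler2 A F = nc_sum (\<lambda>w. nc_smult (A w) (nc_sum_list (map (\<lambda>(u, v). F u v) (cop w)))) (supp A)"

text \<open>T is an extension of the post-Lie product triangleright to U x U satisfying the
  defining rules of the paper.\<close>
definition is_ext :: "(ncpoly \<Rightarrow> ncpoly \<Rightarrow> ncpoly) \<Rightarrow> bool" where
  "is_ext T \<longleftrightarrow>
     (\<forall>a\<in>U. \<forall>b\<in>U. T a b \<in> U)
   \<and> (\<forall>a\<in>U. \<forall>b\<in>U. \<forall>c\<in>U. T (nc_add a b) c = nc_add (T a c) (T b c))
   \<and> (\<forall>a\<in>U. \<forall>b\<in>U. \<forall>r. T (nc_smult r a) b = nc_smult r (T a b))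
   \<and> (\<forall>a\<in>U. \<forall>b\<in>U. \<forall>c\<in>U. T a (nc_add b c) = nc_add (T a b) (T a c))
   \<and> (\<forall>a\<in>U. \<forall>b\<in>U. \<forall>r. T a (nc_smult r b) = nc_smult r (T a b))
   \<comment> \<open>f \<triangleright> g = d_f(g) on f_X\<close>
   \<and> (\<forall>f\<in>lieX. T f (basis [X0]) = nc_zero)
   \<and> (\<forall>f\<in>lieX. T f (basis [X1]) = bracket (basis [X1]) f)
   \<and> (\<forall>f\<in>lieX. \<forall>g\<in>lieX. \<forall>h\<in>lieX.
        T f (bracket g h) = nc_add (bracket (T f g) h) (bracket g (T f h)))
   \<comment> \<open>extension rules\<close>
   \<and> (\<forall>x\<in>lieX. T x nc_one = nc_zero)
   \<and> (\<forall>a\<in>U. T nc_one a = a)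
   \<and> (\<forall>x\<in>lieX. \<forall>a\<in>U. \<forall>y\<in>lieX.
        T (nc_mult x a) y = nc_diff (T x (T a y)) (T (T x a) y))
   \<and> (\<forall>a\<in>U. \<forall>b\<in>U. \<forall>c\<in>U.
        T a (nc_mult b c) = sweedler2 a (\<lambda>u v. nc_mult (T (basis u) b) (T (basis v) c)))"

text \<open>Grossman--Larson product  A \<circledast> B = A_(1) (A_(2) \<triangleright> B).\<close>
definition gl :: "(ncpoly \<Rightarrow> ncpoly \<Rightarrow> ncpoly) \<Rightarrow> ncpoly \<Rightarrow> ncpoly \<Rightarrow> ncpoly" where
  "gl T A B = sweedler2 A (\<lambda>u v. nc_mult (basis u) (T (basis v) B))"

fun word_of :: "nat list \<Rightarrow> word" where
  "word_of [] = []"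
| "word_of [k] = replicate k X0"
| "word_of (k # k' # ks) = replicate k X0 @ X1 # word_of (k' # ks)"

text \<open>For a decomposition p0 \<otimes> ... \<otimes> p(2d), the term
  p0 x0^k1 S(p1) x1 p2 x0^k2 S(p3) x1 ... p(2d) x0^k(d+1) as (sign, word), using
  S(w) = (-1)^|w| rev w.\<close>
fun rterm :: "nat list \<Rightarrow> word list \<Rightarrow> rat \<times> word" where
  "rterm [k] [a] = (1, a @ replicate k X0)"
| "rterm (k # k' # ks) (a # b # ps) =
     (case rterm (k' # ks) ps of (s, r) \<Rightarrow>
        ((-1) ^ length b * s, a @ replicate k X0 @ rev b @ [X1] @ r))"
| "rterm _ _ = (0, [])"

definition rhs :: "ncpoly \<Rightarrow> nat list \<Rightarrow> ncpoly" where
  "rhs A ks = nc_sum (\<lambda>w. nc_smult (A w)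
      (nc_sum_list (map (\<lambda>ps. case rterm ks ps of (s, r) \<Rightarrow> nc_smult s (basis r))
                        (deco (2 * (length ks - 1)) w)))) (supp A)"

end

theory Submission
  imports Defs "HOL-Library.Function_Algebras"
begin


abbreviation ncm (infixl "\<odot>" 70) where "a \<odot> b \<equiv> nc_mult a b"
abbreviation B where "B \<equiv> basis"

declare plus_fun_apply[simp del] zero_fun_apply[simp del] uminus_apply[simp del] minus_apply[simp del] times_fun_apply[simp del]
lemmas pw0 = plus_fun_apply zero_fun_apply uminus_apply minus_apply

lemma sum_apply: "(sum F I) w = (\<Sum>i\<in>I. F i w)"
  by (induction I rule: infinite_finite_induct) (auto simp: pw0)

lemma sum_list_apply: "(sum_list xs) w = sum_list (map (\<lambda>a. a w) xs)"
  by (induction xs) (auto simp: pw0)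

lemma nc_add_eq[simp]: "nc_add a b = a + b" by (auto simp: nc_add_def pw0)
lemma nc_diff_eq[simp]: "nc_diff a b = a - b" by (auto simp: nc_diff_def pw0)
lemma nc_zero_eq[simp]: "nc_zero = 0" by (auto simp: nc_zero_def pw0)
lemma nc_sum_eq[simp]: "nc_sum F I = sum F I" by (auto simp: nc_sum_def sum_apply)
lemma nc_sum_list_eq[simp]: "nc_sum_list xs = sum_list xs" by (auto simp: nc_sum_list_def sum_list_apply)
lemma nc_one_eq[simp]: "nc_one = B []" by (simp add: nc_one_def)
lemma bracket_eq: "bracket a b = a \<odot> b - b \<odot> a" by (simp add: bracket_def)

lemma sm_apply: "nc_smult c a w = c * a w" by (simp add: nc_smult_def)
lemmas pw = pw0 sm_apply
lemma sm_add_r: "nc_smult c (a + b) = nc_smult c a + nc_smult c b" by (auto simp: pw algebra_simps)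
lemma sm_add_l: "nc_smult (c + d) a = nc_smult c a + nc_smult d a" by (auto simp: pw algebra_simps)
lemma sm_diff_r: "nc_smult c (a - b) = nc_smult c a - nc_smult c b" by (auto simp: pw algebra_simps)
lemma sm_sm[simp]: "nc_smult c (nc_smult d a) = nc_smult (c*d) a" by (auto simp: pw)
lemma sm_one[simp]: "nc_smult 1 a = a" by (auto simp: pw)
lemma sm_zero_l[simp]: "nc_smult 0 a = 0" by (auto simp: pw)
lemma sm_zero_r[simp]: "nc_smult c 0 = 0" by (auto simp: pw)
lemma sm_neg1: "nc_smult (-1) a = - a" by (auto simp: pw)
lemma sm_sum: "nc_smult c (sum F I) = (\<Sum>i\<in>I. nc_smult c (F i))"
  by (rule ext) (simp add: pw sum_apply sum_distrib_left)
lemma sm_uminus: "nc_smult c (- a) = - nc_smult c a" by (auto simp: pw)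

lemma mult_apply: "(a \<odot> b) w = (\<Sum>i\<le>length w. a (take i w) * b (drop i w))"
  by (simp add: nc_mult_def)
lemma mult_Nil[simp]: "(a \<odot> b) [] = a [] * b []" by (simp add: nc_mult_def)

lemma mult_add_l: "(a + b) \<odot> c = a \<odot> c + b \<odot> c"
  by (rule ext) (simp add: pw mult_apply algebra_simps sum.distrib)
lemma mult_add_r: "c \<odot> (a + b) = c \<odot> a + c \<odot> b"
  by (rule ext) (simp add: pw mult_apply algebra_simps sum.distrib)
lemma mult_diff_l: "(a - b) \<odot> c = a \<odot> c - b \<odot> c"
  by (rule ext) (simp add: pw mult_apply algebra_simps sum_subtractf)
lemma mult_diff_r: "c \<odot> (a - b) = c \<odot> a - c \<odot> b"
  by (rule ext) (simp add: pw mult_apply algebra_simps sum_subtractf)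
lemma mult_uminus_l: "(- a) \<odot> c = - (a \<odot> c)"
  by (rule ext) (simp add: pw mult_apply sum_negf)
lemma mult_uminus_r: "c \<odot> (- a) = - (c \<odot> a)"
  by (rule ext) (simp add: pw mult_apply sum_negf)
lemma mult_sm_l: "(nc_smult r a) \<odot> c = nc_smult r (a \<odot> c)"
  by (rule ext) (simp add: pw mult_apply sum_distrib_left mult.assoc)
lemma mult_sm_r: "c \<odot> (nc_smult r a) = nc_smult r (c \<odot> a)"
  by (rule ext) (simp add: pw mult_apply sum_distrib_left algebra_simps)
lemma mult_zero_l[simp]: "0 \<odot> c = 0" by (rule ext) (simp add: pw mult_apply)
lemma mult_zero_r[simp]: "c \<odot> 0 = 0" by (rule ext) (simp add: pw mult_apply)
lemma mult_sum_l: "(sum F I) \<odot> c = (\<Sum>i\<in>I. F i \<odot> c)"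
  by (rule ext) (simp add: pw mult_apply sum_apply sum_distrib_right sum.swap[of _ I])
lemma mult_sum_r: "c \<odot> (sum F I) = (\<Sum>i\<in>I. c \<odot> F i)"
  by (rule ext) (simp add: pw mult_apply sum_apply sum_distrib_left sum.swap[of _ I])
lemma mult_sum_list_l: "(sum_list xs) \<odot> c = sum_list (map (\<lambda>x. x \<odot> c) xs)"
  by (induction xs) (simp_all only: sum_list.Nil sum_list.Cons list.map mult_zero_l mult_add_l)
lemma mult_sum_list_r: "c \<odot> (sum_list xs) = sum_list (map (\<lambda>x. c \<odot> x) xs)"
  by (induction xs) (simp_all only: sum_list.Nil sum_list.Cons list.map mult_zero_r mult_add_r)

lemma basis_apply: "B u w = (if w = u then 1 else 0)" by (simp add: basis_def)

lemma take_drop_iff: "i \<le> length w \<Longrightarrow> (take i w = u \<and> drop i w = v) \<longleftrightarrow> (i = length u \<and> w = u @ v)"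
  by (metis append_eq_conv_conj append_take_drop_id length_take min.absorb2)

lemma basis_mult[simp]: "B u \<odot> B v = B (u @ v)"
proof (rule ext)
  fix w
  have "(B u \<odot> B v) w = (\<Sum>i\<le>length w. if i = length u \<and> w = u @ v then 1 else 0)"
    unfolding mult_apply basis_apply
    by (rule sum.cong) (auto simp: take_drop_iff)
  also have "\<dots> = B (u @ v) w"
    by (auto simp: basis_apply sum.delta)
  finally show "(B u \<odot> B v) w = B (u @ v) w" .
qed

section \<open>The space U\<close>

lemma U_iff: "a \<in> U \<longleftrightarrow> finite {w. a w \<noteq> 0}" by (simp add: U_def)
lemma supp_iff: "w \<in> supp a \<longleftrightarrow> a w \<noteq> 0" by (simp add: supp_def)
lemma U_fin: "a \<in> U \<Longrightarrow> finite (supp a)" by (simp add: U_def supp_def)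

lemma basis_U[simp,intro]: "B u \<in> U"
proof -
  have "{w. B u w \<noteq> 0} = {u}" by (auto simp: basis_apply split: if_splits)
  thus ?thesis by (simp add: U_iff)
qed
lemma zero_U[simp,intro]: "0 \<in> U" by (simp add: U_iff pw)
lemma add_U[simp,intro]: "a \<in> U \<Longrightarrow> b \<in> U \<Longrightarrow> a + b \<in> U"
  unfolding U_iff by (rule finite_subset[of _ "{w. a w \<noteq> 0} \<union> {w. b w \<noteq> 0}"]) (auto simp: pw)
lemma uminus_U[simp,intro]: "a \<in> U \<Longrightarrow> - a \<in> U"
  unfolding U_iff by (auto simp: pw)
lemma diff_U[simp,intro]: "a \<in> U \<Longrightarrow> b \<in> U \<Longrightarrow> a - b \<in> U"
  unfolding U_iff by (rule finite_subset[of _ "{w. a w \<noteq> 0} \<union> {w. b w \<noteq> 0}"]) (auto simp: pw)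
lemma sm_U[simp,intro]: "a \<in> U \<Longrightarrow> nc_smult c a \<in> U"
  unfolding U_iff by (rule finite_subset[of _ "{w. a w \<noteq> 0}"]) (auto simp: pw)
lemma sum_U[simp,intro]: "(\<And>i. i \<in> I \<Longrightarrow> F i \<in> U) \<Longrightarrow> sum F I \<in> U"
  by (induction I rule: infinite_finite_induct) auto
lemma sum_list_U[intro]: "(\<And>x. x \<in> set xs \<Longrightarrow> x \<in> U) \<Longrightarrow> sum_list xs \<in> U"
  by (induction xs) auto
lemma mult_U[simp,intro]: "a \<in> U \<Longrightarrow> b \<in> U \<Longrightarrow> a \<odot> b \<in> U"
proof -
  assume a: "a \<in> U" and b: "b \<in> U"
  have "{w. (a \<odot> b) w \<noteq> 0} \<subseteq> (\<lambda>(u,v). u @ v) ` ({w. a w \<noteq> 0} \<times> {w. b w \<noteq> 0})"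
  proof
    fix w assume "w \<in> {w. (a \<odot> b) w \<noteq> 0}"
    then obtain i where "a (take i w) * b (drop i w) \<noteq> 0"
      by (auto simp: mult_apply elim: sum.not_neutral_contains_not_neutral)
    thus "w \<in> (\<lambda>(u,v). u @ v) ` ({w. a w \<noteq> 0} \<times> {w. b w \<noteq> 0})"
      by (auto intro!: image_eqI[of _ _ "(take i w, drop i w)"])
  qed
  thus ?thesis using a b unfolding U_iff by (auto intro: finite_subset)
qed

lemma lieX_U: "f \<in> lieX \<Longrightarrow> f \<in> U"
  by (induction rule: lieX.induct) (auto simp: bracket_eq)

section \<open>Linear extension\<close>

definition lin :: "(word \<Rightarrow> ncpoly) \<Rightarrow> ncpoly \<Rightarrow> ncpoly" where
  "lin X a = (\<Sum>w\<in>supp a. nc_smult (a w) (X w))"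

lemma lin_superset: "finite S \<Longrightarrow> supp a \<subseteq> S \<Longrightarrow> lin X a = (\<Sum>w\<in>S. nc_smult (a w) (X w))"
  unfolding lin_def by (rule sum.mono_neutral_left) (auto simp: supp_iff)

lemma supp_basis: "supp (B u) = {u}" by (auto simp: supp_iff basis_apply split: if_splits)

lemma lin_basis[simp]: "lin X (B u) = X u"
  by (simp add: lin_def supp_basis basis_apply)

lemma lin_add_a: "a \<in> U \<Longrightarrow> b \<in> U \<Longrightarrow> lin X (a + b) = lin X a + lin X b"
proof -
  assume a: "a \<in> U" and b: "b \<in> U"
  let ?S = "supp a \<union> supp b"
  have f: "finite ?S" using a b by (simp add: U_fin)
  have "lin X (a + b) = (\<Sum>w\<in>?S. nc_smult ((a+b) w) (X w))"
    by (rule lin_superset[OF f]) (auto simp: supp_iff pw)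
  also have "\<dots> = (\<Sum>w\<in>?S. nc_smult (a w) (X w)) + (\<Sum>w\<in>?S. nc_smult (b w) (X w))"
    by (simp add: sm_add_l sum.distrib pw)
  also have "\<dots> = lin X a + lin X b"
    by (simp add: lin_superset[OF f])
  finally show ?thesis .
qed

lemma lin_sm_a: "a \<in> U \<Longrightarrow> lin X (nc_smult c a) = nc_smult c (lin X a)"
proof -
  assume a: "a \<in> U"
  have f: "finite (supp a)" using a by (simp add: U_fin)
  have "lin X (nc_smult c a) = (\<Sum>w\<in>supp a. nc_smult (nc_smult c a w) (X w))"
    by (rule lin_superset[OF f]) (auto simp: supp_iff pw)
  thus ?thesis by (simp add: lin_def sm_sum pw)
qed

lemma lin_zero_a[simp]: "lin X 0 = 0" by (simp add: lin_def supp_def pw)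

lemma lin_uminus_a: "a \<in> U \<Longrightarrow> lin X (- a) = - lin X a"
  using lin_sm_a[of a X "-1"] by (simp add: sm_neg1)

lemma lin_diff_a: "a \<in> U \<Longrightarrow> b \<in> U \<Longrightarrow> lin X (a - b) = lin X a - lin X b"
  using lin_add_a[of a "-b" X] lin_uminus_a[of b X] by simp

lemma lin_add_X: "lin (\<lambda>w. X w + Y w) a = lin X a + lin Y a"
  by (simp add: lin_def sm_add_r sum.distrib)
lemma lin_diff_X: "lin (\<lambda>w. X w - Y w) a = lin X a - lin Y a"
  by (simp add: lin_def sm_diff_r sum_subtractf)
lemma lin_zero_X[simp]: "lin (\<lambda>w. 0) a = 0"
  by (simp add: lin_def)
lemma lin_sm_X: "lin (\<lambda>w. nc_smult c (X w)) a = nc_smult c (lin X a)"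
  by (simp add: lin_def sm_sum mult.commute)
lemma lin_uminus_X: "lin (\<lambda>w. - X w) a = - lin X a"
  by (simp add: lin_def sm_uminus sum_negf)
lemma lin_mult_l: "lin (\<lambda>w. P \<odot> X w) a = P \<odot> lin X a"
  by (simp add: lin_def mult_sum_r mult_sm_r)
lemma lin_mult_r: "lin (\<lambda>w. X w \<odot> P) a = lin X a \<odot> P"
  by (simp add: lin_def mult_sum_l mult_sm_l)
lemma lin_sum_list_X: "lin (\<lambda>w. sum_list (map (\<lambda>x. F x w) L)) a = sum_list (map (\<lambda>x. lin (F x) a) L)"
  by (induction L) (simp_all only: list.map sum_list.Nil sum_list.Cons lin_zero_X lin_add_X)

lemma lin_apply: "lin X a v = (\<Sum>w\<in>supp a. a w * X w v)"
  by (simp add: lin_def sum_apply pw)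

lemma lin_cong: "(\<And>w. w \<in> supp a \<Longrightarrow> X w = Y w) \<Longrightarrow> lin X a = lin Y a"
  by (simp add: lin_def)

lemma lin_decomp: "a \<in> U \<Longrightarrow> lin B a = a"
proof (rule ext)
  fix v assume a: "a \<in> U"
  have "lin B a v = (\<Sum>w\<in>supp a. if w = v then a w else 0)"
    unfolding lin_apply basis_apply by (rule sum.cong) auto
  also have "\<dots> = a v" using a by (simp add: U_fin sum.delta' supp_iff)
  finally show "lin B a v = a v" .
qed

lemma lin_U[simp,intro]: "(\<And>w. X w \<in> U) \<Longrightarrow> lin X a \<in> U"
  by (simp add: lin_def sum_U)

definition lin_on :: "(ncpoly \<Rightarrow> ncpoly) \<Rightarrow> bool" where
  "lin_on L \<longleftrightarrow> (\<forall>a\<in>U. \<forall>b\<in>U. L (a + b) = L a + L b) \<and> (\<forall>a\<in>U. \<forall>c. L (nc_smult c a) = nc_smult c (L a))"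

lemma lin_onI: "(\<And>a b. a \<in> U \<Longrightarrow> b \<in> U \<Longrightarrow> L (a + b) = L a + L b) \<Longrightarrow>
   (\<And>a c. a \<in> U \<Longrightarrow> L (nc_smult c a) = nc_smult c (L a)) \<Longrightarrow> lin_on L"
  by (auto simp: lin_on_def)

lemma lin_on_add: "lin_on L \<Longrightarrow> a \<in> U \<Longrightarrow> b \<in> U \<Longrightarrow> L (a + b) = L a + L b"
  by (auto simp: lin_on_def)
lemma lin_on_sm: "lin_on L \<Longrightarrow> a \<in> U \<Longrightarrow> L (nc_smult c a) = nc_smult c (L a)"
  by (auto simp: lin_on_def)
lemma lin_on_zero: "lin_on L \<Longrightarrow> L 0 = 0"
  using lin_on_sm[of L 0 0] by simp
lemma lin_on_uminus: "lin_on L \<Longrightarrow> a \<in> U \<Longrightarrow> L (- a) = - L a"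
  using lin_on_sm[of L a "-1"] by (simp add: sm_neg1)
lemma lin_on_diff: "lin_on L \<Longrightarrow> a \<in> U \<Longrightarrow> b \<in> U \<Longrightarrow> L (a - b) = L a - L b"
  using lin_on_add[of L a "-b"] lin_on_uminus[of L b] by simp
lemma lin_on_sum: "lin_on L \<Longrightarrow> (\<And>i. i \<in> I \<Longrightarrow> F i \<in> U) \<Longrightarrow> L (sum F I) = (\<Sum>i\<in>I. L (F i))"
proof (induction I rule: infinite_finite_induct)
  case (infinite A) thus ?case by (simp add: lin_on_zero)
next
  case empty thus ?case by (simp add: lin_on_zero)
next
  case (insert x F) thus ?case by (simp add: lin_on_add sum_U)
qed
lemma lin_on_sum_list: "lin_on L \<Longrightarrow> (\<And>x. x \<in> set xs \<Longrightarrow> F x \<in> U) \<Longrightarrow> L (sum_list (map F xs)) = sum_list (map (\<lambda>x. L (F x)) xs)"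
proof (induction xs)
  case Nil thus ?case by (simp add: lin_on_zero)
next
  case (Cons x xs)
  have "sum_list (map F xs) \<in> U" using Cons.prems by (auto intro!: sum_list_U)
  thus ?case using Cons by (simp add: lin_on_add)
qed

lemma lin_linear: "lin_on L \<Longrightarrow> (\<And>w. X w \<in> U) \<Longrightarrow> L (lin X a) = lin (\<lambda>w. L (X w)) a"
  unfolding lin_def by (simp add: lin_on_sum lin_on_sm)

lemma lin_linear_decomp: "lin_on L \<Longrightarrow> a \<in> U \<Longrightarrow> L a = lin (\<lambda>w. L (B w)) a"
  using lin_linear[of L B a] by (simp add: lin_decomp)

lemma lin_on_lin: "lin_on (lin X)"
  by (rule lin_onI) (simp_all add: lin_add_a lin_sm_a)
lemma lin_on_mult_l: "lin_on (\<lambda>x. P \<odot> x)"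
  by (rule lin_onI) (simp_all add: mult_add_r mult_sm_r)
lemma lin_on_mult_r: "lin_on (\<lambda>x. x \<odot> P)"
  by (rule lin_onI) (simp_all add: mult_add_l mult_sm_l)
lemma lin_on_comp: "lin_on L \<Longrightarrow> lin_on M \<Longrightarrow> (\<And>a. a \<in> U \<Longrightarrow> M a \<in> U) \<Longrightarrow> lin_on (\<lambda>x. L (M x))"
  by (rule lin_onI) (simp_all add: lin_on_add lin_on_sm)
lemma lin_on_plus: "lin_on L \<Longrightarrow> lin_on M \<Longrightarrow> lin_on (\<lambda>x. L x + M x)"
  by (rule lin_onI) (simp_all add: lin_on_add lin_on_sm sm_add_r)
lemma lin_on_minus: "lin_on L \<Longrightarrow> lin_on M \<Longrightarrow> lin_on (\<lambda>x. L x - M x)"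
  by (rule lin_onI) (simp_all add: lin_on_add lin_on_sm sm_diff_r)

lemma lin_swap: "a \<in> U \<Longrightarrow> b \<in> U \<Longrightarrow> lin (\<lambda>u. lin (\<lambda>v. Z u v) b) a = lin (\<lambda>v. lin (\<lambda>u. Z u v) a) b"
  unfolding lin_def by (simp add: sm_sum sum.swap[of _ "supp a"] mult.commute)

lemma mult_lin_expand: "g \<in> U \<Longrightarrow> h \<in> U \<Longrightarrow> g \<odot> h = lin (\<lambda>u. lin (\<lambda>v. B (u @ v)) h) g"
proof -
  assume g: "g \<in> U" and h: "h \<in> U"
  have "g \<odot> h = lin B g \<odot> lin B h" using g h by (simp add: lin_decomp)
  also have "\<dots> = lin (\<lambda>u. B u \<odot> lin B h) g" by (simp add: lin_mult_r)
  also have "\<dots> = lin (\<lambda>u. lin (\<lambda>v. B (u @ v)) h) g" by (simp add: lin_mult_l[symmetric])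
  finally show ?thesis .
qed

lemma lin_prod: "g \<in> U \<Longrightarrow> h \<in> U \<Longrightarrow> lin Y (g \<odot> h) = lin (\<lambda>u. lin (\<lambda>v. Y (u @ v)) h) g"
proof -
  assume g: "g \<in> U" and h: "h \<in> U"
  have "lin Y (g \<odot> h) = lin Y (lin (\<lambda>u. lin (\<lambda>v. B (u @ v)) h) g)" using g h by (simp add: mult_lin_expand)
  also have "\<dots> = lin (\<lambda>u. lin Y (lin (\<lambda>v. B (u @ v)) h)) g"
    by (rule lin_linear[OF lin_on_lin]) auto
  also have "\<dots> = lin (\<lambda>u. lin (\<lambda>v. Y (u @ v)) h) g"
    by (subst lin_linear[OF lin_on_lin]) auto
  finally show ?thesis .
qed

lemma basis_assoc: "c \<in> U \<Longrightarrow> B u \<odot> (B v \<odot> c) = B (u @ v) \<odot> c"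
proof -
  assume c: "c \<in> U"
  have "B u \<odot> (B v \<odot> lin B c) = B (u @ v) \<odot> lin B c"
    by (simp add: lin_mult_l[symmetric])
  thus ?thesis using c by (simp add: lin_decomp)
qed

lemma mult_assoc: "a \<in> U \<Longrightarrow> b \<in> U \<Longrightarrow> c \<in> U \<Longrightarrow> (a \<odot> b) \<odot> c = a \<odot> (b \<odot> c)"
proof -
  assume a: "a \<in> U" and b: "b \<in> U" and c: "c \<in> U"
  have "(a \<odot> b) \<odot> c = lin (\<lambda>w. B w \<odot> c) (a \<odot> b)"
    by (subst lin_decomp[symmetric, of "a \<odot> b"]) (use a b in \<open>auto simp: lin_mult_r\<close>)
  also have "\<dots> = lin (\<lambda>u. lin (\<lambda>v. B u \<odot> (B v \<odot> c)) b) a"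
    using a b c by (simp add: lin_prod basis_assoc)
  also have "\<dots> = lin (\<lambda>u. B u \<odot> lin (\<lambda>v. (B v \<odot> c)) b) a"
    by (simp add: lin_mult_l)
  also have "\<dots> = lin (\<lambda>u. B u \<odot> (b \<odot> c)) a"
    using b by (simp add: lin_mult_r lin_decomp)
  also have "\<dots> = a \<odot> (b \<odot> c)" using a by (simp add: lin_mult_r lin_decomp)
  finally show ?thesis .
qed




lemma sum_list_map_zero[simp]: "sum_list (map (\<lambda>x. (0::ncpoly)) xs) = 0"
  by (induction xs) simp_all
lemma sum_list_map_uminus: "sum_list (map (\<lambda>x. - f x) xs) = - sum_list (map f xs :: ncpoly list)"
  by (induction xs) simp_all

definition cs :: "(word \<Rightarrow> word \<Rightarrow> ncpoly) \<Rightarrow> word \<Rightarrow> ncpoly" where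
  "cs X w = sum_list (map (\<lambda>pq. X (fst pq) (snd pq)) (cop w))"

lemma cs_Nil[simp]: "cs X [] = X [] []" by (simp add: cs_def)
lemma cs_Cons[simp]: "cs X (c # w) = cs (\<lambda>p q. X (c # p) q) w + cs (\<lambda>p q. X p (c # q)) w"
  by (simp add: cs_def comp_def case_prod_beta)

lemma cs_add: "cs (\<lambda>p q. X p q + Y p q) w = cs X w + cs Y w"
  by (simp add: cs_def sum_list_addf)
lemma cs_zero[simp]: "cs (\<lambda>p q. 0) w = 0"
  by (simp add: cs_def)
lemma cs_uminus: "cs (\<lambda>p q. - X p q) w = - cs X w"
  by (simp add: cs_def sum_list_map_uminus)
lemma cs_diff: "cs (\<lambda>p q. X p q - Y p q) w = cs X w - cs Y w"
  using cs_add[of X "\<lambda>p q. - Y p q" w] cs_uminus[of Y w] by simp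
lemma cs_sm: "cs (\<lambda>p q. nc_smult r (X p q)) w = nc_smult r (cs X w)"
  by (induction w arbitrary: X) (simp_all add: sm_add_r)
lemma cs_mult_l: "cs (\<lambda>p q. P \<odot> X p q) w = P \<odot> cs X w"
  by (induction w arbitrary: X) (simp_all add: mult_add_r)
lemma cs_mult_r: "cs (\<lambda>p q. X p q \<odot> P) w = cs X w \<odot> P"
  by (induction w arbitrary: X) (simp_all add: mult_add_l)
lemma cs_U[intro]: "(\<And>p q. X p q \<in> U) \<Longrightarrow> cs X w \<in> U"
  by (induction w arbitrary: X) simp_all
lemma cs_cong: "(\<And>p q. X p q = Y p q) \<Longrightarrow> cs X w = cs Y w"
  by (metis ext)

lemma cs_append: "cs X (u @ v) = cs (\<lambda>p1 q1. cs (\<lambda>p2 q2. X (p1 @ p2) (q1 @ q2)) v) u"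
  by (induction u arbitrary: X) simp_all

lemma cs_coassoc: "cs (\<lambda>b v'. cs (\<lambda>b1 b2. Y b1 b2 v') b) v = cs (\<lambda>b1 r. cs (\<lambda>b2 v'. Y b1 b2 v') r) v"
proof (induction v arbitrary: Y)
  case Nil thus ?case by simp
next
  case (Cons c v)
  have l: "cs (\<lambda>b v'. cs (\<lambda>b1 b2. Y b1 b2 v') b) (c # v) =
     cs (\<lambda>b v'. cs (\<lambda>b1 b2. Y (c # b1) b2 v') b) v + cs (\<lambda>b v'. cs (\<lambda>b1 b2. Y b1 (c # b2) v') b) v
     + cs (\<lambda>b v'. cs (\<lambda>b1 b2. Y b1 b2 (c # v')) b) v"
    by (simp add: cs_add)
  have r: "cs (\<lambda>b1 r. cs (\<lambda>b2 v'. Y b1 b2 v') r) (c # v) =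
     cs (\<lambda>b1 r. cs (\<lambda>b2 v'. Y (c # b1) b2 v') r) v + cs (\<lambda>b1 r. cs (\<lambda>b2 v'. Y b1 (c # b2) v') r) v
     + cs (\<lambda>b1 r. cs (\<lambda>b2 v'. Y b1 b2 (c # v')) r) v"
    by (simp add: cs_add add.assoc)
  show ?case unfolding l r
    using Cons.IH[of "\<lambda>b1 b2 v'. Y (c # b1) b2 v'"] Cons.IH[of "\<lambda>b1 b2 v'. Y b1 (c # b2) v'"]
      Cons.IH[of "\<lambda>b1 b2 v'. Y b1 b2 (c # v')"] by simp
qed

lemma cs_fst_Nil: "cs (\<lambda>p q. if p = [] then Y q else 0) v = Y v"
  by (induction v arbitrary: Y) simp_all
lemma cs_snd_Nil: "cs (\<lambda>p q. if q = [] then Y p else 0) v = Y v"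
  by (induction v arbitrary: Y) simp_all

lemma lin_cs: "lin (\<lambda>w. cs (Z w) u) a = cs (\<lambda>p q. lin (\<lambda>w. Z w p q) a) u"
  by (induction u arbitrary: Z) (simp_all add: lin_add_X)

lemma lin_on_cs: "lin_on L \<Longrightarrow> (\<And>p q. X p q \<in> U) \<Longrightarrow> L (cs X w) = cs (\<lambda>p q. L (X p q)) w"
  unfolding cs_def by (subst lin_on_sum_list) auto

lemma sweedler2_eq: "sweedler2 A F = lin (cs F) A"
  by (simp add: sweedler2_def lin_def cs_def split_def)

lemma gl_eq: "gl T A C = lin (cs (\<lambda>u v. B u \<odot> T (B v) C)) A"
  by (simp add: gl_def sweedler2_eq)

definition Rw :: "nat list \<Rightarrow> word \<Rightarrow> ncpoly" where
  "Rw ks w = sum_list (map (\<lambda>ps. case rterm ks ps of (s, r) \<Rightarrow> nc_smult s (B r)) (deco (2 * (length ks - 1)) w))"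

lemma rhs_eq: "rhs A ks = lin (Rw ks) A"
  by (simp add: rhs_def lin_def Rw_def)

section \<open>Primitive elements\<close>

definition prim :: "ncpoly \<Rightarrow> bool" where
  "prim f \<longleftrightarrow> (\<forall>X. lin (cs X) f = lin (\<lambda>u. X u [] + X [] u) f)"

lemma prim_D: "prim f \<Longrightarrow> lin (cs X) f = lin (\<lambda>u. X u [] + X [] u) f"
  by (simp add: prim_def)

lemma prim_prod_aux:
  assumes g: "g \<in> U" "prim g" and h: "h \<in> U" "prim h"
  shows "lin (cs X) (g \<odot> h) = lin (\<lambda>u. lin (\<lambda>v. X (u @ v) [] + X u v + X v u + X [] (u @ v)) h) g"
proof -
  have "lin (cs X) (g \<odot> h) = lin (\<lambda>u. lin (\<lambda>v. cs X (u @ v)) h) g"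
    using g h by (simp add: lin_prod)
  also have "\<dots> = lin (\<lambda>u. lin (\<lambda>v. cs (\<lambda>p1 q1. cs (\<lambda>p2 q2. X (p1 @ p2) (q1 @ q2)) v) u) h) g"
    by (simp add: cs_append)
  also have "\<dots> = lin (\<lambda>u. cs (\<lambda>p1 q1. lin (\<lambda>v. cs (\<lambda>p2 q2. X (p1 @ p2) (q1 @ q2)) v) h) u) g"
    by (simp add: lin_cs)
  also have "\<dots> = lin (\<lambda>u. lin (\<lambda>v. cs (\<lambda>p2 q2. X (u @ p2) q2) v) h + lin (\<lambda>v. cs (\<lambda>p2 q2. X p2 (u @ q2)) v) h) g"
    using prim_D[OF g(2)] by simp
  also have "\<dots> = lin (\<lambda>u. lin (\<lambda>v. X (u @ v) [] + X u v) h + lin (\<lambda>v. X v u + X [] (u @ v)) h) g"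
    using prim_D[OF h(2)] by simp
  also have "\<dots> = lin (\<lambda>u. lin (\<lambda>v. X (u @ v) [] + X u v + X v u + X [] (u @ v)) h) g"
    by (simp add: lin_add_X[symmetric] add.assoc)
  finally show ?thesis .
qed

lemma prim_bracket:
  assumes g: "g \<in> U" "prim g" and h: "h \<in> U" "prim h"
  shows "prim (bracket g h)"
  unfolding prim_def
proof
  fix X
  have sw: "lin (\<lambda>u. lin (\<lambda>v. X u v + X v u) h) g = lin (\<lambda>u. lin (\<lambda>v. X u v + X v u) g) h"
    using g h by (subst lin_swap) (simp_all add: add.commute)
  have e1: "lin (cs X) (g \<odot> h) = lin (\<lambda>u. lin (\<lambda>v. X (u @ v) [] + X [] (u @ v)) h) g + lin (\<lambda>u. lin (\<lambda>v. X u v + X v u) h) g"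
    using prim_prod_aux[OF g h, of X] by (simp add: lin_add_X[symmetric] add_ac)
  have e2: "lin (cs X) (h \<odot> g) = lin (\<lambda>u. lin (\<lambda>v. X (u @ v) [] + X [] (u @ v)) g) h + lin (\<lambda>u. lin (\<lambda>v. X u v + X v u) g) h"
    using prim_prod_aux[OF h g, of X] by (simp add: lin_add_X[symmetric] add_ac)
  have e3: "lin (\<lambda>u. X u [] + X [] u) (g \<odot> h) = lin (\<lambda>u. lin (\<lambda>v. X (u @ v) [] + X [] (u @ v)) h) g"
    using g h by (simp add: lin_prod)
  have e4: "lin (\<lambda>u. X u [] + X [] u) (h \<odot> g) = lin (\<lambda>u. lin (\<lambda>v. X (u @ v) [] + X [] (u @ v)) g) h"
    using g h by (simp add: lin_prod)
  show "lin (cs X) (bracket g h) = lin (\<lambda>u. X u [] + X [] u) (bracket g h)"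
    using g h by (simp add: bracket_eq lin_diff_a e1 e2 e3 e4 sw)
qed

lemma prim_lieX: "f \<in> lieX \<Longrightarrow> prim f"
proof (induction rule: lieX.induct)
  case gen0 thus ?case by (simp add: prim_def)
next
  case gen1 thus ?case by (simp add: prim_def)
next
  case (add a b) thus ?case by (simp add: prim_def lin_add_a lieX_U)
next
  case (smult a c) thus ?case by (simp add: prim_def lin_sm_a lieX_U)
next
  case (brk a b) thus ?case by (simp add: prim_bracket lieX_U)
qed




lemma add_lieX: "a \<in> lieX \<Longrightarrow> b \<in> lieX \<Longrightarrow> a + b \<in> lieX"
  using lieX.add by fastforce
lemma sm_lieX: "a \<in> lieX \<Longrightarrow> nc_smult c a \<in> lieX"
  using lieX.smult by fastforce
lemma br_lieX: "a \<in> lieX \<Longrightarrow> b \<in> lieX \<Longrightarrow> bracket a b \<in> lieX"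
  using lieX.brk by fastforce
lemma zero_lieX: "0 \<in> lieX"
  using sm_lieX[OF lieX.gen0, of 0] by simp
lemma letter_lieX: "B [c] \<in> lieX"
  by (cases c) (auto intro: lieX.intros)

lemma eps_lieX: "f \<in> lieX \<Longrightarrow> f [] = 0"
  by (induction rule: lieX.induct) (auto simp: basis_apply pw bracket_eq)

lemma mult_one_l[simp]: "a \<in> U \<Longrightarrow> B [] \<odot> a = a"
proof -
  assume a: "a \<in> U"
  have "B [] \<odot> lin B a = lin B a" by (simp add: lin_mult_l[symmetric])
  thus ?thesis using a by (simp add: lin_decomp)
qed

context
  fixes T :: "ncpoly \<Rightarrow> ncpoly \<Rightarrow> ncpoly"
  assumes ext: "is_ext T"
begin

lemma T_U[simp,intro]: "a \<in> U \<Longrightarrow> b \<in> U \<Longrightarrow> T a b \<in> U"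
  using ext by (simp add: is_ext_def)
lemma T_add1: "a \<in> U \<Longrightarrow> b \<in> U \<Longrightarrow> c \<in> U \<Longrightarrow> T (a + b) c = T a c + T b c"
  using ext by (simp add: is_ext_def)
lemma T_sm1: "a \<in> U \<Longrightarrow> b \<in> U \<Longrightarrow> T (nc_smult r a) b = nc_smult r (T a b)"
  using ext by (simp add: is_ext_def)
lemma T_add2: "a \<in> U \<Longrightarrow> b \<in> U \<Longrightarrow> c \<in> U \<Longrightarrow> T a (b + c) = T a b + T a c"
  using ext by (simp add: is_ext_def)
lemma T_sm2: "a \<in> U \<Longrightarrow> b \<in> U \<Longrightarrow> T a (nc_smult r b) = nc_smult r (T a b)"
  using ext by (simp add: is_ext_def)
lemma T_x0: "f \<in> lieX \<Longrightarrow> T f (B [X0]) = 0"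
  using ext by (simp add: is_ext_def)
lemma T_x1: "f \<in> lieX \<Longrightarrow> T f (B [X1]) = bracket (B [X1]) f"
  using ext by (simp add: is_ext_def)
lemma T_der: "f \<in> lieX \<Longrightarrow> g \<in> lieX \<Longrightarrow> h \<in> lieX \<Longrightarrow> T f (bracket g h) = bracket (T f g) h + bracket g (T f h)"
  using ext by (simp add: is_ext_def)
lemma T_one: "f \<in> lieX \<Longrightarrow> T f (B []) = 0"
  using ext by (simp add: is_ext_def)
lemma T_unit: "a \<in> U \<Longrightarrow> T (B []) a = a"
  using ext by (simp add: is_ext_def)
lemma T_rec: "x \<in> lieX \<Longrightarrow> a \<in> U \<Longrightarrow> y \<in> lieX \<Longrightarrow> T (x \<odot> a) y = T x (T a y) - T (T x a) y"
  using ext by (simp add: is_ext_def)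
lemma T_prod: "a \<in> U \<Longrightarrow> b \<in> U \<Longrightarrow> c \<in> U \<Longrightarrow> T a (b \<odot> c) = lin (cs (\<lambda>u v. T (B u) b \<odot> T (B v) c)) a"
  using ext by (simp add: is_ext_def sweedler2_eq)

lemma lin_on_T1: "b \<in> U \<Longrightarrow> lin_on (\<lambda>x. T x b)"
  by (rule lin_onI) (simp_all add: T_add1 T_sm1)
lemma lin_on_T2: "a \<in> U \<Longrightarrow> lin_on (T a)"
  by (rule lin_onI) (simp_all add: T_add2 T_sm2)
lemma T_lin1: "a \<in> U \<Longrightarrow> b \<in> U \<Longrightarrow> T a b = lin (\<lambda>w. T (B w) b) a"
  using lin_linear_decomp[OF lin_on_T1[of b], of a] by simp
lemma T_lin2: "a \<in> U \<Longrightarrow> b \<in> U \<Longrightarrow> T a b = lin (\<lambda>w. T a (B w)) b"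
  using lin_linear_decomp[OF lin_on_T2[of a], of b] by simp
lemma T_zero2[simp]: "a \<in> U \<Longrightarrow> T a 0 = 0"
  using lin_on_zero[OF lin_on_T2[of a]] by simp
lemma T_diff2: "a \<in> U \<Longrightarrow> b \<in> U \<Longrightarrow> c \<in> U \<Longrightarrow> T a (b - c) = T a b - T a c"
  using lin_on_diff[OF lin_on_T2[of a], of b c] by simp
lemma T_diff1: "a \<in> U \<Longrightarrow> b \<in> U \<Longrightarrow> c \<in> U \<Longrightarrow> T (a - b) c = T a c - T b c"
  using lin_on_diff[OF lin_on_T1[of c], of a b] by simp

lemma leibniz: "f \<in> lieX \<Longrightarrow> b \<in> U \<Longrightarrow> c \<in> U \<Longrightarrow> T f (b \<odot> c) = T f b \<odot> c + b \<odot> T f c"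
proof -
  assume f: "f \<in> lieX" and b: "b \<in> U" and c: "c \<in> U"
  have fU: "f \<in> U" using f by (rule lieX_U)
  have "T f (b \<odot> c) = lin (cs (\<lambda>u v. T (B u) b \<odot> T (B v) c)) f" using fU b c by (rule T_prod)
  also have "\<dots> = lin (\<lambda>u. T (B u) b \<odot> T (B []) c + T (B []) b \<odot> T (B u) c) f"
    by (rule prim_D[OF prim_lieX[OF f]])
  also have "\<dots> = lin (\<lambda>u. T (B u) b \<odot> c + b \<odot> T (B u) c) f"
    using b c by (simp only: T_unit)
  also have "\<dots> = lin (\<lambda>u. T (B u) b \<odot> c) f + lin (\<lambda>u. b \<odot> T (B u) c) f"
    by (rule lin_add_X)
  also have "\<dots> = lin (\<lambda>u. T (B u) b) f \<odot> c + b \<odot> lin (\<lambda>u. T (B u) c) f"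
    by (simp only: lin_mult_l lin_mult_r)
  also have "\<dots> = T f b \<odot> c + b \<odot> T f c"
    using fU b c by (simp only: T_lin1[symmetric])
  finally show ?thesis .
qed

lemma T_lieX_aux: "g \<in> lieX \<Longrightarrow> f \<in> lieX \<Longrightarrow> T f g \<in> lieX"
proof (induction g rule: lieX.induct)
  case gen0 thus ?case by (simp add: T_x0 zero_lieX)
next
  case gen1 thus ?case by (simp add: T_x1 br_lieX lieX.gen1)
next
  case (add a b) thus ?case by (simp add: T_add2 lieX_U add_lieX)
next
  case (smult a c) thus ?case by (simp add: T_sm2 lieX_U sm_lieX)
next
  case (brk a b) thus ?case by (simp add: T_der br_lieX add_lieX)
qed

lemma T_lieX: "f \<in> lieX \<Longrightarrow> g \<in> lieX \<Longrightarrow> T f g \<in> lieX"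
  using T_lieX_aux by blast

lemma basis_Nil_apply: "B u [] = (if u = [] then 1 else 0)"
  by (simp add: basis_apply)

lemma eps_T_word: "f \<in> lieX \<Longrightarrow> T f (B w) [] = 0"
proof (induction w)
  case Nil thus ?case by (simp add: T_one pw)
next
  case (Cons c w)
  have "T f (B (c # w)) = T f (B [c]) \<odot> B w + B [c] \<odot> T f (B w)"
    using leibniz[OF Cons.prems, of "B [c]" "B w"] by simp
  thus ?case using Cons eps_lieX[OF T_lieX[OF Cons.prems letter_lieX]]
    by (simp add: pw basis_Nil_apply)
qed

lemma eps_T: "f \<in> lieX \<Longrightarrow> a \<in> U \<Longrightarrow> T f a [] = 0"
  by (simp add: T_lin2[of f a] lieX_U lin_apply eps_T_word)

end



definition S :: "ncpoly \<Rightarrow> ncpoly" where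
  "S a = lin (\<lambda>u. nc_smult ((-1) ^ length u) (B (rev u))) a"

lemma S_basis: "S (B u) = nc_smult ((-1) ^ length u) (B (rev u))"
  by (simp add: S_def)
lemma S_U[simp,intro]: "S a \<in> U"
  by (simp add: S_def lin_U)
lemma lin_on_S: "lin_on S"
  unfolding S_def by (rule lin_on_lin)
lemma lin_S: "lin (\<lambda>u. S (B u)) a = S a"
  by (simp add: S_def)

lemma lin_prod_basis_r: "g \<in> U \<Longrightarrow> lin Y (g \<odot> B p) = lin (\<lambda>u. Y (u @ p)) g"
  by (simp add: lin_prod)
lemma lin_prod_basis_l: "h \<in> U \<Longrightarrow> lin Y (B p \<odot> h) = lin (\<lambda>v. Y (p @ v)) h"
  by (simp add: lin_prod)

lemma S_mult: "a \<in> U \<Longrightarrow> b \<in> U \<Longrightarrow> S (a \<odot> b) = S b \<odot> S a"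
proof -
  assume a: "a \<in> U" and b: "b \<in> U"
  have "S (a \<odot> b) = lin (\<lambda>u. lin (\<lambda>v. S (B (u @ v))) b) a"
    using a b by (simp add: S_def lin_prod)
  also have "\<dots> = lin (\<lambda>u. lin (\<lambda>v. S (B v) \<odot> S (B u)) b) a"
    by (simp add: S_basis mult_sm_l mult_sm_r power_add mult.commute)
  also have "\<dots> = S b \<odot> S a"
    by (simp add: lin_mult_r lin_mult_l lin_S)
  finally show ?thesis .
qed

lemma S_lieX: "f \<in> lieX \<Longrightarrow> S f = - f"
proof (induction rule: lieX.induct)
  case gen0 thus ?case by (simp add: S_basis sm_neg1)
next
  case gen1 thus ?case by (simp add: S_basis sm_neg1)
next
  case (add a b) thus ?case using lieX_U by (simp add: S_def lin_add_a)
next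
  case (smult a c) thus ?case using lieX_U by (simp add: S_def lin_sm_a sm_uminus)
next
  case (brk a b)
  hence aU: "a \<in> U" and bU: "b \<in> U" using lieX_U by auto
  show ?case using brk aU bU
    by (simp add: bracket_eq S_def[symmetric] lin_on_diff[OF lin_on_S] S_mult mult_uminus_l mult_uminus_r)
qed

definition prodl :: "ncpoly list \<Rightarrow> ncpoly" where
  "prodl gs = foldr (\<odot>) gs (B [])"

lemma prodl_Nil[simp]: "prodl [] = B []" by (simp add: prodl_def)
lemma prodl_Cons[simp]: "prodl (g # gs) = g \<odot> prodl gs" by (simp add: prodl_def)
lemma prodl_U: "set gs \<subseteq> U \<Longrightarrow> prodl gs \<in> U"
  by (induction gs) auto
lemma prodl_append: "set xs \<subseteq> U \<Longrightarrow> set ys \<subseteq> U \<Longrightarrow> prodl (xs @ ys) = prodl xs \<odot> prodl ys"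
  by (induction xs) (auto simp: mult_assoc prodl_U)
lemma prodl_word: "B w = prodl (map (\<lambda>c. B [c]) w)"
proof (induction w)
  case (Cons c w)
  have "B (c # w) = B [c] \<odot> B w" by simp
  thus ?case using Cons by simp
qed simp

lemma basis_Nil_Nil[simp]: "B [] [] = 1" by (simp add: basis_apply)

lemma mult_one_r[simp]: "a \<in> U \<Longrightarrow> a \<odot> B [] = a"
proof -
  assume a: "a \<in> U"
  have "lin B a \<odot> B [] = lin B a" by (simp add: lin_mult_r[symmetric])
  thus ?thesis using a by (simp add: lin_decomp)
qed

lemma lieX_subset_U: "set gs \<subseteq> lieX \<Longrightarrow> set gs \<subseteq> U"
  using lieX_U by blast

context
  fixes T :: "ncpoly \<Rightarrow> ncpoly \<Rightarrow> ncpoly"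
  assumes iext: "is_ext T"
begin

lemma uniq_aux:
  assumes psi: "lin_on psi"
    and hk: "\<And>hs. length hs = k \<Longrightarrow> set hs \<subseteq> lieX \<Longrightarrow> psi (prodl hs) = 0"
    and g: "g \<in> lieX"
  shows "set pre \<subseteq> lieX \<Longrightarrow> set rest \<subseteq> lieX \<Longrightarrow> length pre + length rest = k \<Longrightarrow>
     psi (prodl pre \<odot> T g (prodl rest)) = 0"
proof (induction rest arbitrary: pre)
  case Nil thus ?case using g by (simp add: T_one[OF iext] lin_on_zero[OF psi])
next
  case (Cons h r)
  have pU: "set pre \<subseteq> U" and rU: "set r \<subseteq> U" and hU: "h \<in> U" and gU: "g \<in> U"
    using Cons.prems g lieX_U by auto
  have tg: "T g h \<in> lieX" using T_lieX[OF iext g] Cons.prems by simp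
  have "T g (prodl (h # r)) = T g h \<odot> prodl r + h \<odot> T g (prodl r)"
    using leibniz[OF iext g hU prodl_U[OF rU]] by simp
  hence "prodl pre \<odot> T g (prodl (h # r)) = prodl (pre @ [T g h] @ r) + prodl (pre @ [h]) \<odot> T g (prodl r)"
    using pU rU hU gU tg lieX_U[OF tg]
    by (simp add: mult_add_r prodl_append mult_assoc prodl_U T_U[OF iext])
  moreover have "psi (prodl (pre @ [T g h] @ r)) = 0"
    using Cons.prems tg by (intro hk) auto
  moreover have "psi (prodl (pre @ [h]) \<odot> T g (prodl r)) = 0"
    using Cons.prems by (intro Cons.IH) auto
  moreover have "prodl (pre @ [T g h] @ r) \<in> U" "prodl (pre @ [h]) \<odot> T g (prodl r) \<in> U"
    using pU rU hU gU tg lieX_U[OF tg] by (auto intro!: prodl_U mult_U T_U[OF iext])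
  ultimately show ?case by (simp add: lin_on_add[OF psi])
qed

lemma uniq:
  assumes psi: "lin_on psi" and one: "psi (B []) = 0"
    and rec: "\<And>f a. f \<in> lieX \<Longrightarrow> a \<in> U \<Longrightarrow> psi a = 0 \<Longrightarrow> psi (f \<odot> a) + psi (T f a) = 0"
  shows "psi (B w) = 0"
proof -
  have main: "\<And>gs. length gs = k \<Longrightarrow> set gs \<subseteq> lieX \<Longrightarrow> psi (prodl gs) = 0" for k
  proof (induction k)
    case 0 thus ?case using one by simp
  next
    case (Suc k)
    then obtain g gs' where gs: "gs = g # gs'" by (cases gs) auto
    have g: "g \<in> lieX" and gs': "set gs' \<subseteq> lieX" "length gs' = k" using Suc.prems gs by auto
    have pU: "prodl gs' \<in> U" using prodl_U lieX_subset_U[OF gs'(1)] by blast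
    have z: "psi (prodl gs') = 0" using Suc.IH gs' by blast
    have "psi (prodl [] \<odot> T g (prodl gs')) = 0"
      by (rule uniq_aux[OF psi Suc.IH g]) (use gs' in auto)
    hence "psi (T g (prodl gs')) = 0" using T_U[OF iext lieX_U[OF g] pU] by simp
    thus ?case using rec[OF g pU z] gs by simp
  qed
  show ?thesis
    by (subst prodl_word) (rule main[OF refl], auto intro: letter_lieX)
qed

definition psi0 :: "ncpoly \<Rightarrow> ncpoly" where
  "psi0 a = T a (B [X0]) - nc_smult (a []) (B [X0])"

lemmas T_U' = T_U[OF iext]
declare T_U'[simp]

lemma T_x0_word: "T (B u) (B [X0]) = (if u = [] then B [X0] else 0)"
proof -
  have lo: "lin_on psi0"
    unfolding psi0_def
    by (rule lin_on_minus[OF lin_on_T1[OF iext]]) (auto intro!: lin_onI simp: sm_add_l pw)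
  have "psi0 (B u) = 0"
  proof (rule uniq[OF lo])
    show "psi0 (B []) = 0" by (simp add: psi0_def T_unit[OF iext] basis_Nil_apply)
  next
    fix f a assume f: "f \<in> lieX" and a: "a \<in> U" and z: "psi0 a = 0"
    have fU: "f \<in> U" using f by (rule lieX_U)
    have ta: "T a (B [X0]) = nc_smult (a []) (B [X0])" using z by (simp add: psi0_def)
    have "T (f \<odot> a) (B [X0]) = T f (T a (B [X0])) - T (T f a) (B [X0])"
      using T_rec[OF iext f a lieX.gen0] .
    also have "T f (T a (B [X0])) = 0" using ta fU by (simp add: T_sm2[OF iext] T_x0[OF iext f])
    finally show "psi0 (f \<odot> a) + psi0 (T f a) = 0"
      using eps_lieX[OF f] eps_T[OF iext f a] by (simp add: psi0_def)
  qed
  thus ?thesis by (cases u) (simp_all add: psi0_def basis_apply)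
qed

lemma mult_x0_cancel: assumes e: "B [X0] \<odot> P = B [X0] \<odot> Q" and P: "P \<in> U" and Q: "Q \<in> U" shows "P = Q"
proof (rule ext)
  fix w
  have key: "(B [X0] \<odot> R) (X0 # w) = R w" if R: "R \<in> U" for R
  proof -
    have "(B [X0] \<odot> lin B R) (X0 # w) = lin (\<lambda>v. B (X0 # v)) R (X0 # w)"
      by (simp add: lin_mult_l[symmetric])
    also have "\<dots> = lin B R w"
      by (simp add: lin_apply basis_apply)
    finally show ?thesis using R by (simp add: lin_decomp)
  qed
  show "P w = Q w" using key[OF P] key[OF Q] e by simp
qed

lemma T_Nil_word: "T (B u) (B []) = (if u = [] then B [] else 0)"
proof -
  have "T (B u) (B [X0]) = cs (\<lambda>p q. T (B p) (B [X0]) \<odot> T (B q) (B [])) u"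
    using T_prod[OF iext, of "B u" "B [X0]" "B []"] by simp
  also have "\<dots> = cs (\<lambda>p q. if p = [] then B [X0] \<odot> T (B q) (B []) else 0) u"
    by (rule cs_cong) (simp add: T_x0_word)
  also have "\<dots> = B [X0] \<odot> T (B u) (B [])" by (rule cs_fst_Nil)
  finally have "B [X0] \<odot> T (B u) (B []) = (if u = [] then B [X0] else 0)"
    by (simp add: T_x0_word)
  also have "\<dots> = B [X0] \<odot> (if u = [] then B [] else 0)" by simp
  finally show ?thesis by (rule mult_x0_cancel) (auto intro: T_U[OF iext])
qed


lemma DS: "f \<in> lieX \<Longrightarrow> T f (S (B w)) = S (T f (B w))"
proof (induction w)
  case Nil thus ?case by (simp add: S_basis T_one[OF iext] lin_on_zero[OF lin_on_S])
next
  case (Cons c w)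
  have f: "f \<in> lieX" by fact
  have fU: "f \<in> U" using f by (rule lieX_U)
  have g: "T f (B [c]) \<in> lieX" by (rule T_lieX[OF iext f letter_lieX])
  have gU: "T f (B [c]) \<in> U" using g by (rule lieX_U)
  have Sc: "S (B [c]) = - B [c]" by (simp add: S_basis sm_neg1)
  have "T f (S (B (c # w))) = T f (S (B w) \<odot> S (B [c]))"
    using S_mult[of "B [c]" "B w"] by simp
  also have "\<dots> = T f (S (B w)) \<odot> S (B [c]) + S (B w) \<odot> T f (S (B [c]))"
    by (rule leibniz[OF iext f]) auto
  also have "\<dots> = S (T f (B w)) \<odot> S (B [c]) + S (B w) \<odot> (- T f (B [c]))"
    using Cons fU by (simp add: Sc lin_on_uminus[OF lin_on_T2[OF iext fU]])
  finally have l: "T f (S (B (c # w))) = S (T f (B w)) \<odot> S (B [c]) + S (B w) \<odot> (- T f (B [c]))" .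
  have "S (T f (B (c # w))) = S (T f (B [c]) \<odot> B w + B [c] \<odot> T f (B w))"
    using leibniz[OF iext f, of "B [c]" "B w"] by simp
  also have "\<dots> = S (B w) \<odot> S (T f (B [c])) + S (T f (B w)) \<odot> S (B [c])"
    using gU fU by (simp add: lin_on_add[OF lin_on_S] S_mult)
  also have "\<dots> = S (B w) \<odot> (- T f (B [c])) + S (T f (B w)) \<odot> S (B [c])"
    by (simp add: S_lieX[OF g])
  finally show ?case using l by (simp add: add.commute)
qed

lemma CD: "f \<in> lieX \<Longrightarrow> lin (cs X) (T f (B w)) =
   cs (\<lambda>p q. lin (\<lambda>p'. X p' q) (T f (B p)) + lin (\<lambda>q'. X p q') (T f (B q))) w"
proof (induction w arbitrary: X)
  case Nil thus ?case by (simp add: T_one[OF iext])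
next
  case (Cons c w)
  have f: "f \<in> lieX" by fact
  have fU: "f \<in> U" using f by (rule lieX_U)
  define g where "g = T f (B [c])"
  have g: "g \<in> lieX" unfolding g_def by (rule T_lieX[OF iext f letter_lieX])
  have gU: "g \<in> U" using g by (rule lieX_U)
  define D where "D = (\<lambda>p. T f (B p))"
  have DU: "D p \<in> U" for p using fU by (simp add: D_def)
  have Dc: "D (c # p) = g \<odot> B p + B [c] \<odot> D p" for p
    using leibniz[OF iext f, of "B [c]" "B p"] by (simp add: D_def g_def)
  have linD: "lin Y (D (c # p)) = lin (\<lambda>u. Y (u @ p)) g + lin (\<lambda>v. Y (c # v)) (D p)" for Y p
    using gU DU by (simp add: Dc lin_add_a lin_prod_basis_r lin_prod_basis_l)
  have "lin (cs X) (D (c # w)) = lin (\<lambda>u. cs X (u @ w)) g + lin (\<lambda>v. cs X (c # v)) (D w)"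
    by (rule linD)
  also have "lin (\<lambda>u. cs X (u @ w)) g =
      cs (\<lambda>p q. lin (\<lambda>u. X (u @ p) q) g + lin (\<lambda>u. X p (u @ q)) g) w"
  proof -
    have "lin (\<lambda>u. cs X (u @ w)) g = lin (cs (\<lambda>p1 q1. cs (\<lambda>p2 q2. X (p1 @ p2) (q1 @ q2)) w)) g"
      by (simp add: cs_append)
    also have "\<dots> = lin (\<lambda>u. cs (\<lambda>p2 q2. X (u @ p2) q2) w + cs (\<lambda>p2 q2. X p2 (u @ q2)) w) g"
      by (simp add: prim_D[OF prim_lieX[OF g]])
    also have "\<dots> = cs (\<lambda>p q. lin (\<lambda>u. X (u @ p) q) g + lin (\<lambda>u. X p (u @ q)) g) w"
      by (simp add: cs_add[symmetric] lin_cs lin_add_X)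
    finally show ?thesis .
  qed
  also have "lin (\<lambda>v. cs X (c # v)) (D w) = lin (cs (\<lambda>p q. X (c # p) q)) (D w) + lin (cs (\<lambda>p q. X p (c # q))) (D w)"
    by (simp add: lin_add_X)
  also have "\<dots> = cs (\<lambda>p q. lin (\<lambda>p'. X (c # p') q) (D p) + lin (\<lambda>q'. X (c # p) q') (D q)) w
      + cs (\<lambda>p q. lin (\<lambda>p'. X p' (c # q)) (D p) + lin (\<lambda>q'. X p (c # q')) (D q)) w"
    using Cons.IH[OF f, of "\<lambda>p q. X (c # p) q"] Cons.IH[OF f, of "\<lambda>p q. X p (c # q)"]
    by (simp add: D_def)
  finally have l: "lin (cs X) (D (c # w)) = cs (\<lambda>p q. lin (\<lambda>u. X (u @ p) q) g + lin (\<lambda>u. X p (u @ q)) g) w +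
      (cs (\<lambda>p q. lin (\<lambda>p'. X (c # p') q) (D p) + lin (\<lambda>q'. X (c # p) q') (D q)) w
      + cs (\<lambda>p q. lin (\<lambda>p'. X p' (c # q)) (D p) + lin (\<lambda>q'. X p (c # q')) (D q)) w)" .
  have r: "cs (\<lambda>p q. lin (\<lambda>p'. X p' q) (D p) + lin (\<lambda>q'. X p q') (D q)) (c # w) =
     cs (\<lambda>p q. (lin (\<lambda>u. X (u @ p) q) g + lin (\<lambda>v. X (c # v) q) (D p)) + lin (\<lambda>q'. X (c # p) q') (D q)) w
   + cs (\<lambda>p q. lin (\<lambda>p'. X p' (c # q)) (D p) + (lin (\<lambda>u. X p (u @ q)) g + lin (\<lambda>v. X p (c # v)) (D q))) w"
    by (simp add: linD)
  have "lin (cs X) (D (c # w)) = cs (\<lambda>p q. lin (\<lambda>p'. X p' q) (D p) + lin (\<lambda>q'. X p q') (D q)) (c # w)"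
    unfolding l r by (simp add: cs_add[symmetric] add_ac)
  thus ?case by (simp add: D_def)
qed


definition Phi :: "word \<Rightarrow> ncpoly" where
  "Phi u = cs (\<lambda>p q. S (B p) \<odot> (B [X1] \<odot> B q)) u"
definition phi0 :: "ncpoly \<Rightarrow> ncpoly" where
  "phi0 a = lin Phi a"

lemma Phi_U[simp]: "Phi u \<in> U" by (auto simp: Phi_def)
lemma phi0_U[simp]: "phi0 a \<in> U" by (auto simp: phi0_def)

lemma I_A: assumes f: "f \<in> lieX"
  shows "phi0 (f \<odot> B w) = cs (\<lambda>p q. S (B p) \<odot> (T f (B [X1]) \<odot> B q)) w"
proof -
  have fU: "f \<in> U" using f by (rule lieX_U)
  let ?G = "\<lambda>p q. S (B p) \<odot> (B [X1] \<odot> B q)"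
  have "phi0 (f \<odot> B w) = lin (\<lambda>u. Phi (u @ w)) f"
    using fU by (simp add: phi0_def lin_prod_basis_r)
  also have "\<dots> = lin (cs (\<lambda>p1 q1. cs (\<lambda>p2 q2. ?G (p1 @ p2) (q1 @ q2)) w)) f"
    by (simp add: Phi_def cs_append)
  also have "\<dots> = lin (\<lambda>u. cs (\<lambda>p2 q2. ?G (u @ p2) q2) w + cs (\<lambda>p2 q2. ?G p2 (u @ q2)) w) f"
    by (simp add: prim_D[OF prim_lieX[OF f]])
  also have "\<dots> = cs (\<lambda>p q. lin (\<lambda>u. ?G (u @ p) q) f + lin (\<lambda>u. ?G p (u @ q)) f) w"
    by (simp add: cs_add[symmetric] lin_cs lin_add_X)
  also have "\<dots> = cs (\<lambda>p q. S (B p) \<odot> (T f (B [X1]) \<odot> B q)) w"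
  proof (rule cs_cong)
    fix p q
    have e1: "?G (u @ p) q = S (B p) \<odot> (S (B u) \<odot> (B [X1] \<odot> B q))" for u
      using S_mult[of "B u" "B p"] by (simp add: mult_assoc)
    have e2: "?G p (u @ q) = S (B p) \<odot> (B [X1] \<odot> (B u \<odot> B q))" for u
      by simp
    have "lin (\<lambda>u. ?G (u @ p) q) f = S (B p) \<odot> (S f \<odot> (B [X1] \<odot> B q))"
      unfolding e1 by (simp add: lin_mult_l lin_mult_r lin_S)
    also have "\<dots> = - (S (B p) \<odot> (f \<odot> (B [X1] \<odot> B q)))"
      by (simp add: S_lieX[OF f] mult_uminus_l mult_uminus_r)
    finally have l1: "lin (\<lambda>u. ?G (u @ p) q) f = - (S (B p) \<odot> (f \<odot> (B [X1] \<odot> B q)))" .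
    have l2: "lin (\<lambda>u. ?G p (u @ q)) f = S (B p) \<odot> (B [X1] \<odot> (f \<odot> B q))"
      unfolding e2 by (simp add: lin_mult_l lin_mult_r lin_decomp fU del: basis_mult)
    show "lin (\<lambda>u. ?G (u @ p) q) f + lin (\<lambda>u. ?G p (u @ q)) f = S (B p) \<odot> (T f (B [X1]) \<odot> B q)"
      unfolding l1 l2 using fU
      by (simp add: T_x1[OF iext f] bracket_eq mult_diff_l mult_diff_r mult_assoc)
  qed
  finally show ?thesis .
qed

lemma I_B: assumes f: "f \<in> lieX"
  shows "phi0 (T f (B w)) = cs (\<lambda>p q. T f (S (B p)) \<odot> (B [X1] \<odot> B q) + S (B p) \<odot> (B [X1] \<odot> T f (B q))) w"
proof -
  have fU: "f \<in> U" using f by (rule lieX_U)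
  have "phi0 (T f (B w)) = cs (\<lambda>p q. lin (\<lambda>p'. S (B p') \<odot> (B [X1] \<odot> B q)) (T f (B p))
      + lin (\<lambda>q'. S (B p) \<odot> (B [X1] \<odot> B q')) (T f (B q))) w"
    unfolding phi0_def Phi_def by (rule CD[OF f])
  also have "\<dots> = cs (\<lambda>p q. T f (S (B p)) \<odot> (B [X1] \<odot> B q) + S (B p) \<odot> (B [X1] \<odot> T f (B q))) w"
    using fU by (simp add: lin_mult_l lin_mult_r lin_S lin_decomp DS[OF f] del: basis_mult)
  finally show ?thesis .
qed

lemma I_C: assumes f: "f \<in> lieX"
  shows "T f (Phi w) = cs (\<lambda>p q. T f (S (B p)) \<odot> (B [X1] \<odot> B q)
     + S (B p) \<odot> (T f (B [X1]) \<odot> B q + B [X1] \<odot> T f (B q))) w"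
proof -
  have fU: "f \<in> U" using f by (rule lieX_U)
  have "T f (Phi w) = cs (\<lambda>p q. T f (S (B p) \<odot> (B [X1] \<odot> B q))) w"
    unfolding Phi_def by (rule lin_on_cs[OF lin_on_T2[OF iext fU]]) simp
  also have "\<dots> = cs (\<lambda>p q. T f (S (B p)) \<odot> (B [X1] \<odot> B q)
     + S (B p) \<odot> (T f (B [X1]) \<odot> B q + B [X1] \<odot> T f (B q))) w"
    by (simp add: leibniz[OF iext f] del: basis_mult)
  finally show ?thesis .
qed

lemma I_word: "f \<in> lieX \<Longrightarrow> phi0 (f \<odot> B w) + phi0 (T f (B w)) = T f (Phi w)"
  by (simp add: I_A I_B I_C cs_add[symmetric] mult_add_r add_ac del: basis_mult)


lemma phi0_eq: "phi0 = lin Phi" by (rule ext) (simp add: phi0_def)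
lemma lin_on_phi0: "lin_on phi0" unfolding phi0_eq by (rule lin_on_lin)
lemma phi0_basis[simp]: "phi0 (B w) = Phi w" by (simp add: phi0_def)

lemma I_gen: assumes f: "f \<in> lieX" and a: "a \<in> U"
  shows "phi0 (f \<odot> a) + phi0 (T f a) = T f (phi0 a)"
proof -
  have fU: "f \<in> U" using f by (rule lieX_U)
  have l1: "lin_on (\<lambda>x. phi0 (f \<odot> x) + phi0 (T f x))"
    by (intro lin_on_plus lin_on_comp[OF lin_on_phi0] lin_on_mult_l lin_on_T2[OF iext fU]) (simp_all add: fU)
  have l2: "lin_on (\<lambda>x. T f (phi0 x))"
    by (rule lin_on_comp[OF lin_on_T2[OF iext fU] lin_on_phi0]) simp
  have "phi0 (f \<odot> a) + phi0 (T f a) = lin (\<lambda>w. phi0 (f \<odot> B w) + phi0 (T f (B w))) a"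
    using lin_linear_decomp[OF l1 a] by simp
  also have "\<dots> = lin (\<lambda>w. T f (phi0 (B w))) a"
    by (simp add: I_word[OF f])
  also have "\<dots> = T f (phi0 a)"
    using lin_linear_decomp[OF l2 a] by simp
  finally show ?thesis .
qed

definition psi1 :: "ncpoly \<Rightarrow> ncpoly" where
  "psi1 a = T a (B [X1]) - phi0 a"

lemma T_x1_word: "T (B u) (B [X1]) = Phi u"
proof -
  have lo: "lin_on psi1"
    unfolding psi1_def by (rule lin_on_minus[OF lin_on_T1[OF iext] lin_on_phi0]) simp
  have "psi1 (B u) = 0"
  proof (rule uniq[OF lo])
    show "psi1 (B []) = 0" by (simp add: psi1_def T_unit[OF iext] Phi_def S_basis)
  next
    fix f a assume f: "f \<in> lieX" and a: "a \<in> U" and z: "psi1 a = 0"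
    have fU: "f \<in> U" using f by (rule lieX_U)
    have ta: "T a (B [X1]) = phi0 a" using z by (simp add: psi1_def)
    have "T (f \<odot> a) (B [X1]) = T f (T a (B [X1])) - T (T f a) (B [X1])"
      using T_rec[OF iext f a lieX.gen1] .
    thus "psi1 (f \<odot> a) + psi1 (T f a) = 0"
      using I_gen[OF f a] ta unfolding psi1_def by (metis (no_types, lifting) add_diff_cancel_left' diff_add_cancel diff_diff_eq diff_self)
  qed
  thus ?thesis by (simp add: psi1_def)
qed


lemma T_x0pow: "T (B v) (B (replicate k X0 @ z)) = B (replicate k X0) \<odot> T (B v) (B z)"
proof (induction k arbitrary: v)
  case 0 thus ?case by simp
next
  case (Suc k)
  have "T (B v) (B (replicate (Suc k) X0 @ z)) = T (B v) (B [X0] \<odot> B (replicate k X0 @ z))"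
    by simp
  also have "\<dots> = cs (\<lambda>p q. T (B p) (B [X0]) \<odot> T (B q) (B (replicate k X0 @ z))) v"
    using T_prod[OF iext, of "B v" "B [X0]" "B (replicate k X0 @ z)"] by simp
  also have "\<dots> = cs (\<lambda>p q. if p = [] then B [X0] \<odot> T (B q) (B (replicate k X0 @ z)) else 0) v"
    by (rule cs_cong) (simp add: T_x0_word)
  also have "\<dots> = B [X0] \<odot> T (B v) (B (replicate k X0 @ z))" by (rule cs_fst_Nil)
  also have "\<dots> = B [X0] \<odot> (B (replicate k X0) \<odot> T (B v) (B z))" using Suc by simp
  also have "\<dots> = B (replicate (Suc k) X0) \<odot> T (B v) (B z)" by (simp add: basis_assoc)
  finally show ?case .
qed

lemma T_x1cons: "T (B v) (B (X1 # W)) = cs (\<lambda>b v'. Phi b \<odot> T (B v') (B W)) v"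
proof -
  have "T (B v) (B (X1 # W)) = T (B v) (B [X1] \<odot> B W)" by simp
  also have "\<dots> = cs (\<lambda>p q. T (B p) (B [X1]) \<odot> T (B q) (B W)) v"
    using T_prod[OF iext, of "B v" "B [X1]" "B W"] by simp
  finally show ?thesis by (simp add: T_x1_word)
qed

definition Gw :: "nat list \<Rightarrow> word \<Rightarrow> ncpoly" where
  "Gw ks u = cs (\<lambda>a v. B a \<odot> T (B v) (B (word_of ks))) u"

lemma Gw_single: "Gw [k] u = Rw [k] u"
proof -
  have "Gw [k] u = cs (\<lambda>a v. B a \<odot> (B (replicate k X0) \<odot> T (B v) (B []))) u"
    unfolding Gw_def using T_x0pow[of _ k "[]"] by simp
  also have "\<dots> = cs (\<lambda>a v. if v = [] then B (a @ replicate k X0) else 0) u"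
    by (rule cs_cong) (simp add: T_Nil_word)
  also have "\<dots> = B (u @ replicate k X0)" by (rule cs_snd_Nil)
  finally show ?thesis by (simp add: Rw_def)
qed

lemma Gw_step: "Gw (k # k' # ks) u =
   cs (\<lambda>a v. B a \<odot> (B (replicate k X0) \<odot> cs (\<lambda>b1 r. S (B b1) \<odot> (B [X1] \<odot> Gw (k' # ks) r)) v)) u"
proof -
  let ?W = "word_of (k' # ks)"
  have inner: "T (B v) (B (X1 # ?W)) = cs (\<lambda>b1 r. S (B b1) \<odot> (B [X1] \<odot> Gw (k' # ks) r)) v" for v
  proof -
    have "T (B v) (B (X1 # ?W)) = cs (\<lambda>b v'. cs (\<lambda>b1 b2. S (B b1) \<odot> (B [X1] \<odot> B b2) \<odot> T (B v') (B ?W)) b) v"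
      by (simp add: T_x1cons Phi_def cs_mult_r del: basis_mult)
    also have "\<dots> = cs (\<lambda>b1 r. cs (\<lambda>b2 v'. S (B b1) \<odot> (B [X1] \<odot> B b2) \<odot> T (B v') (B ?W)) r) v"
      by (rule cs_coassoc)
    also have "\<dots> = cs (\<lambda>b1 r. S (B b1) \<odot> (B [X1] \<odot> Gw (k' # ks) r)) v"
      by (simp add: Gw_def cs_mult_l mult_assoc del: basis_mult)
    finally show ?thesis .
  qed
  show ?thesis
    unfolding Gw_def[of "k # k' # ks"] by (simp add: T_x0pow inner del: basis_mult)
qed


lemma sum_deco_aux: "sum_list (map F (concat (map (\<lambda>(u, v). map (\<lambda>r. u # r) (deco n v)) L))) =
   sum_list (map (\<lambda>pq. sum_list (map (\<lambda>ps. F (fst pq # ps)) (deco n (snd pq)))) L)"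
  by (induction L) (auto simp: comp_def)

lemma sum_deco_Suc: "sum_list (map F (deco (Suc n) w)) = cs (\<lambda>a v. sum_list (map (\<lambda>ps. F (a # ps)) (deco n v))) w"
  by (simp only: deco.simps sum_deco_aux cs_def)

lemma rterm_step: "(case rterm (k # k' # ks) (a # b # ps) of (s, r) \<Rightarrow> nc_smult s (B r)) =
  B a \<odot> (B (replicate k X0) \<odot> (S (B b) \<odot> (B [X1] \<odot> (case rterm (k' # ks) ps of (s, r) \<Rightarrow> nc_smult s (B r)))))"
proof -
  obtain s r where e: "rterm (k' # ks) ps = (s, r)" by force
  show ?thesis by (simp add: e S_basis mult_sm_l mult_sm_r mult.commute)
qed

lemma Rw_step: "Rw (k # k' # ks) u =
   cs (\<lambda>a v. B a \<odot> (B (replicate k X0) \<odot> cs (\<lambda>b r. S (B b) \<odot> (B [X1] \<odot> Rw (k' # ks) r)) v)) u"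
proof -
  have n: "2 * (length (k # k' # ks) - 1) = Suc (Suc (2 * (length (k' # ks) - 1)))" by simp
  show ?thesis
    unfolding Rw_def n sum_deco_Suc rterm_step
    by (simp add: mult_sum_list_r map_map comp_def cs_mult_l[symmetric] del: basis_mult)
qed

lemma Gw_Rw: "ks \<noteq> [] \<Longrightarrow> Gw ks u = Rw ks u"
proof (induction ks arbitrary: u rule: induct_list012)
  case 1 thus ?case by simp
next
  case (2 k) show ?case by (rule Gw_single)
next
  case (3 k k' ks)
  show ?case using "3.IH"(2) by (simp add: Gw_step Rw_step del: basis_mult)
qed

end

theorem mainTheorem14:
  fixes T :: "ncpoly \<Rightarrow> ncpoly \<Rightarrow> ncpoly" and A :: ncpoly and ks :: "nat list"
  assumes "is_ext T" and "A \<in> U" and "ks \<noteq> []"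
  shows "gl T A (basis (word_of ks)) = rhs A ks"
proof -
  have g: "Gw T ks = cs (\<lambda>u v. B u \<odot> T (B v) (B (word_of ks)))"
    by (rule ext) (simp add: Gw_def[OF assms(1)])
  have "gl T A (basis (word_of ks)) = lin (Gw T ks) A"
    by (simp add: gl_eq g)
  also have "\<dots> = lin (Rw ks) A"
    using Gw_Rw[OF assms(1) assms(3)] by (metis ext)
  also have "\<dots> = rhs A ks" by (simp add: rhs_eq)
  finally show ?thesis .
qed


end
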